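(* Let $h_0\in C^1([1,\infty),\mathbb{R}^+)$ with $h_0'\ge0$, $t^{-2}h_0(t)\in L^1([1,\infty))$ and $t^{-1}h_0'(t)\in L^1([1,\infty))$. Define $$h(t)=\int_1^\infty (t\vee t_1)^{-1}h_0'(t_1)\,dt_1,\quad N_m(t)=\int_1^t h_0'(t_1)h^m(t_1)\,dt_1,\quad Q_m(t)=\int_1^\infty (t\vee t_1)^{-1}h_0'(t_1)h^m(t_1)\,dt_1,$$ $Q_{-1}=1$, and, when $\int_1^\infty h_0'(t_1)h^{m+1}(t_1)dt_1<\infty$ (condition ( * )$_m$), $P_m(t)=\int_1^\infty h(t\vee t_1)h_0'(t_1)h^m(t_1)\,dt_1$. Let $i,j,m$ be nonnegative integers, $1\le a\le b$ and $t\ge1$. Then: $\int_t^\infty t_1^{-2}N_m(t_1)dt_1=Q_m(t)$; $\int_1^t t_1^{-2}N_0(t_1)N_m(t_1)dt_1=N_{m+1}(t)-h(t)N_m(t)\le N_{m+1}(t)$; $\int_t^\infty t_1^{-2}N_0(t_1)N_m(t_1)dt_1=P_m(t)$ if ( * )$_m$ holds; $N_i(t)N_j(t)\le N_0(t)N_{i+j}(t)$; $N_i(t)Q_j(t)\le h(t)N_{i+j}(t)\le N_{i+j+1}(t)$; $Q_i(t)Q_j(t)\le h(t)Q_{i+j}(t)\le 2Q_{i+j+1}(t)$; $\int_t^\infty h_0'(t_1)h(t_1)Q_{m-1}(t_1)dt_1\le\int_t^\infty h_0'(t_1)Q_m(t_1)dt_1$; $\int_t^\infty h_0'(t_1)Q_m(t_1)dt_1\le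 P_m(t)$ if ( * )$_m$ holds; $\int_1^t h_0'(t_1)h(t_1)Q_{m-1}(t_1)dt_1\le N_{m+1}(t)$; $\int_1^t h_0'(t_1)Q_m(t_1)dt_1\le N_{m+1}(t)$; $\int_a^b h_0'(t)Q_m(t)dt\le Q_m(a)(h_0(b)-h_0(a))$; $\int_a^b h_0'(t)h(t)Q_{m-1}(t)dt\le 2Q_m(a)(h_0(b)-h_0(a))$.
   Context: $a\vee b=\max(a,b)$. *)

theory Defs
  imports "HOL-Analysis.Analysis"
begin

text \<open>Here d plays the role of the derivative h0' of h0 on [1,oo).
  Integrals over unbounded ranges are nonnegative Lebesgue integrals (values in [0,oo]);
  the auxiliary functions h, Q_m, P_m are the real values of those integrals.\<close>

definition hh :: "(real \<Rightarrow> real) \<Rightarrow> real \<Rightarrow> real" where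
  "hh d t = enn2real (\<integral>\<^sup>+ s\<in>{1..}. ennreal (d s / max t s) \<partial>lborel)"

definition NN :: "(real \<Rightarrow> real) \<Rightarrow> nat \<Rightarrow> real \<Rightarrow> real" where
  "NN d m t = (LBINT s:{1..t}. d s * hh d s ^ m)"

text \<open>Q_k for k \<ge> 0; Q_{-1} = 1 (negative indices are only used for k = -1).\<close>
definition QQ :: "(real \<Rightarrow> real) \<Rightarrow> int \<Rightarrow> real \<Rightarrow> real" where
  "QQ d k t = (if k < 0 then 1
      else enn2real (\<integral>\<^sup>+ s\<in>{1..}. ennreal (d s * hh d s ^ nat k / max t s) \<partial>lborel))"

definition cond_star :: "(real \<Rightarrow> real) \<Rightarrow> nat \<Rightarrow> bool" where
  "cond_star d m \<longleftrightarrow> (\<integral>\<^sup>+ s\<in>{1..}. ennreal (d s * hh d s ^ Suc m) \<partial>lborel) < \<infinity>"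

definition PP :: "(real \<Rightarrow> real) \<Rightarrow> nat \<Rightarrow> real \<Rightarrow> real" where
  "PP d m t = enn2real (\<integral>\<^sup>+ s\<in>{1..}. ennreal (hh d (max t s) * d s * hh d s ^ m) \<partial>lborel)"

end

theory Submission
  imports Defs
begin

lemma inv_sq:
  assumes "0 < x"
  shows "(\<integral>\<^sup>+ r. ennreal (indicator {x..} r / r\<^sup>2) \<partial>lborel) = ennreal (1 / x)"
proof -
  have "((\<lambda>r. r powr (-2)) has_integral -(x powr (-2+1)) / (-2+1)) {x..}"
    by (rule has_integral_powr_to_inf) (use assms in auto)
  then have I: "((\<lambda>r. 1 / r\<^sup>2) has_integral 1 / x) {x..}"
  proof (subst has_integral_cong[where g="\<lambda>r. r powr (-2)"])
    fix r assume "r \<in> {x..}"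
    then have "r > 0" using assms by auto
    then show "1 / r\<^sup>2 = r powr (-2)" by (simp add: powr_minus powr_numeral divide_inverse)
  next
    assume "((\<lambda>r. r powr (-2)) has_integral -(x powr (-2+1)) / (-2+1)) {x..}"
    moreover have "-(x powr (-2+1)) / (-2+1) = 1 / x" using assms by (simp add: powr_minus_divide)
    ultimately show "((\<lambda>r. r powr (-2)) has_integral 1 / x) {x..}" by simp
  qed
  have "(\<integral>\<^sup>+ r. ennreal (1 / r\<^sup>2) * indicator {x..} r \<partial>lborel) = ennreal (1 / x)"
    using nn_integral_has_integral_lebesgue'[OF _ I] by simp
  then show ?thesis
    by (subst (asm) nn_integral_cong[where v="\<lambda>r. ennreal (indicator {x..} r / r\<^sup>2)"])
       (auto simp: indicator_def)
qed

lemma open_closed_ray: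
  fixes x :: real and F :: "real \<Rightarrow> real"
  shows
  "(\<integral>\<^sup>+ r. ennreal (indicator {x<..} r * F r) \<partial>lborel) = (\<integral>\<^sup>+ r. ennreal (indicator {x..} r * F r) \<partial>lborel)"
proof (rule nn_integral_cong_AE)
  show "AE r in lborel. ennreal (indicator {x<..} r * F r) = ennreal (indicator {x..} r * F r)"
    using AE_lborel_singleton[of x] by eventually_elim (auto simp: indicator_def less_le)
qed

lemma tri_swap:
  fixes f g :: "real \<Rightarrow> real"
  assumes [measurable]: "f \<in> borel_measurable borel" "g \<in> borel_measurable borel"
    and nn: "\<And>x. 0 \<le> f x" "\<And>x. 0 \<le> g x"
  shows "(\<integral>\<^sup>+ s. ennreal (g s) * (\<integral>\<^sup>+ u. ennreal (f u * indicator {..s} u) \<partial>lborel) \<partial>lborel)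
       = (\<integral>\<^sup>+ u. ennreal (f u) * (\<integral>\<^sup>+ s. ennreal (g s * indicator {u..} s) \<partial>lborel) \<partial>lborel)"
proof -
  have "(\<integral>\<^sup>+ s. ennreal (g s) * (\<integral>\<^sup>+ u. ennreal (f u * indicator {..s} u) \<partial>lborel) \<partial>lborel)
      = (\<integral>\<^sup>+ s. (\<integral>\<^sup>+ u. ennreal (f u * g s * (if u \<le> s then 1 else 0)) \<partial>lborel) \<partial>lborel)"
  proof (rule nn_integral_cong)
    fix s
    have "ennreal (g s) * (\<integral>\<^sup>+ u. ennreal (f u * indicator {..s} u) \<partial>lborel)
       = (\<integral>\<^sup>+ u. ennreal (g s) * ennreal (f u * indicator {..s} u) \<partial>lborel)"
      by (rule nn_integral_cmult[symmetric]) measurable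
    also have "\<dots> = (\<integral>\<^sup>+ u. ennreal (f u * g s * (if u \<le> s then 1 else 0)) \<partial>lborel)"
      by (rule nn_integral_cong) (use nn in \<open>auto simp: indicator_def ennreal_mult[symmetric] mult_ac\<close>)
    finally show "ennreal (g s) * (\<integral>\<^sup>+ u. ennreal (f u * indicator {..s} u) \<partial>lborel)
       = (\<integral>\<^sup>+ u. ennreal (f u * g s * (if u \<le> s then 1 else 0)) \<partial>lborel)" .
  qed
  also have "\<dots> = (\<integral>\<^sup>+ u. (\<integral>\<^sup>+ s. ennreal (f u * g s * (if u \<le> s then 1 else 0)) \<partial>lborel) \<partial>lborel)"
    by (rule lborel_pair.Fubini') simp
  also have "\<dots> = (\<integral>\<^sup>+ u. ennreal (f u) * (\<integral>\<^sup>+ s. ennreal (g s * indicator {u..} s) \<partial>lborel) \<partial>lborel)"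
  proof (rule nn_integral_cong)
    fix u
    have "ennreal (f u) * (\<integral>\<^sup>+ s. ennreal (g s * indicator {u..} s) \<partial>lborel)
       = (\<integral>\<^sup>+ s. ennreal (f u) * ennreal (g s * indicator {u..} s) \<partial>lborel)"
      by (rule nn_integral_cmult[symmetric]) measurable
    also have "\<dots> = (\<integral>\<^sup>+ s. ennreal (f u * g s * (if u \<le> s then 1 else 0)) \<partial>lborel)"
      by (rule nn_integral_cong) (use nn in \<open>auto simp: indicator_def ennreal_mult[symmetric] mult_ac\<close>)
    finally show "(\<integral>\<^sup>+ s. ennreal (f u * g s * (if u \<le> s then 1 else 0)) \<partial>lborel)
      = ennreal (f u) * (\<integral>\<^sup>+ s. ennreal (g s * indicator {u..} s) \<partial>lborel)" by simp
  qed
  finally show ?thesis .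
qed

lemma pow_prod_nn:
  fixes g c :: real assumes "0 \<le> g" "0 \<le> c"
  shows "0 \<le> (g ^ i - c ^ i) * (g ^ j - c ^ j)"
proof (cases "g \<le> c")
  case True
  then have "g ^ i \<le> c ^ i" "g ^ j \<le> c ^ j" using assms by (auto intro: power_mono)
  then show ?thesis by (simp add: mult_nonpos_nonpos)
next
  case False
  then have "c ^ i \<le> g ^ i" "c ^ j \<le> g ^ j" using assms by (auto intro: power_mono)
  then show ?thesis by simp
qed

lemma cheb:
  fixes f g :: "real \<Rightarrow> real"
  assumes [measurable]: "f \<in> borel_measurable borel" "g \<in> borel_measurable borel"
    and fnn: "\<And>x. 0 \<le> f x" and gnn: "\<And>x. 0 \<le> g x" and gC: "\<And>x. g x \<le> C"
    and fi: "integrable lborel f"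
  shows "(\<integral> x. f x * g x ^ i \<partial>lborel) * (\<integral> x. f x * g x ^ j \<partial>lborel)
         \<le> (\<integral> x. f x \<partial>lborel) * (\<integral> x. f x * g x ^ (i + j) \<partial>lborel)"
proof -
  have C0: "0 \<le> C" using gnn[of 0] gC[of 0] by simp
  have ik: "integrable lborel (\<lambda>x. f x * g x ^ k)" for k
  proof (rule Bochner_Integration.integrable_bound)
    show "integrable lborel (\<lambda>x. C ^ k * f x)" using fi by simp
    show "AE x in lborel. norm (f x * g x ^ k) \<le> norm (C ^ k * f x)"
    proof (rule AE_I2)
      fix x
      have "g x ^ k \<le> C ^ k" using gnn gC by (intro power_mono) auto
      then show "norm (f x * g x ^ k) \<le> norm (C ^ k * f x)"
        using fnn[of x] gnn[of x] C0 by (simp add: abs_mult mult_left_mono mult.commute)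
    qed
  qed simp
  define M where "M k = (\<integral> x. f x * g x ^ k \<partial>lborel)" for k
  have M0: "M 0 = (\<integral> x. f x \<partial>lborel)" by (simp add: M_def)
  have Mnn: "0 \<le> M k" for k unfolding M_def
    by (rule Bochner_Integration.integral_nonneg) (simp add: fnn gnn)
  show ?thesis
  proof (cases "i = 0 \<or> M 0 = 0")
    case True
    then show ?thesis
    proof
      assume "i = 0" then show ?thesis by simp
    next
      assume "M 0 = 0"
      then have "AE x in lborel. f x = 0"
        using fi fnn unfolding M0 by (subst (asm) integral_nonneg_eq_0_iff_AE) auto
      then have "M i = 0" unfolding M_def
        by (intro integral_eq_zero_AE) (auto elim: eventually_mono)
      then show ?thesis using Mnn[of 0] Mnn[of "i+j"] unfolding M_def by simp
    qed
  next
    case False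
    then have ip: "0 < i" and M0p: "0 < M 0" using Mnn[of 0] by auto
    define c where "c = root i (M i / M 0)"
    have c0: "0 \<le> c" unfolding c_def by (intro real_root_ge_zero divide_nonneg_pos Mnn M0p)
    have ci: "c ^ i = M i / M 0" unfolding c_def using Mnn M0p ip
      by (simp add: real_root_pow_pos2)
    have "0 \<le> (\<integral> x. f x * ((g x ^ i - c ^ i) * (g x ^ j - c ^ j)) \<partial>lborel)"
      by (rule Bochner_Integration.integral_nonneg) (simp add: fnn gnn c0 pow_prod_nn)
    also have "(\<integral> x. f x * ((g x ^ i - c ^ i) * (g x ^ j - c ^ j)) \<partial>lborel)
        = (\<integral> x. f x * g x ^ (i + j) - c ^ j * (f x * g x ^ i) - c ^ i * (f x * g x ^ j) + c ^ (i + j) * (f x * g x ^ 0) \<partial>lborel)"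
      by (rule Bochner_Integration.integral_cong) (auto simp: algebra_simps power_add)
    also have "\<dots> = M (i + j) - c ^ j * M i - c ^ i * M j + c ^ (i + j) * M 0"
      unfolding M_def using ik by (simp add: Bochner_Integration.integral_diff Bochner_Integration.integral_add del: power_0)
    finally have "0 \<le> M (i + j) - c ^ j * M i - c ^ i * M j + c ^ (i + j) * M 0" .
    then have "0 \<le> M 0 * (M (i + j) - c ^ j * M i - c ^ i * M j + c ^ (i + j) * M 0)"
      using M0p by simp
    also have "\<dots> = M 0 * M (i + j) - M i * M j"
      using M0p by (simp add: algebra_simps power_add ci)
    finally show ?thesis unfolding M_def[symmetric] M0[symmetric] by simp
  qed
qed

locale L =
  fixes d :: "real \<Rightarrow> real"
  assumes dnn: "\<And>x. 1 \<le> x \<Longrightarrow> 0 \<le> d x"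
  and dmeas: "(\<lambda>x. indicator {1..} x * d x) \<in> borel_measurable borel"
  and dfin: "(\<integral>\<^sup>+ x. ennreal (indicator {1..} x * d x / x) \<partial>lborel) < \<infinity>"
begin

definition D where "D x = indicator {1..} x * d x"

lemma D_meas[measurable]: "D \<in> borel_measurable borel"
  using dmeas unfolding D_def by simp

lemma D_nn: "0 \<le> D x"
  by (auto simp: D_def indicator_def dnn)

lemma D_out: "x < 1 \<Longrightarrow> D x = 0"
  by (auto simp: D_def indicator_def)

lemma max_pos: "D s \<noteq> 0 \<Longrightarrow> max t s \<ge> s \<and> s \<ge> 1"
  by (auto simp: D_def indicator_def split: if_splits)

lemma Dfin: "(\<integral>\<^sup>+ x. ennreal (D x / x) \<partial>lborel) < \<infinity>"
  using dfin unfolding D_def .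

lemma bound_fin:
  assumes "\<And>s. 0 \<le> f s" "\<And>s. D s \<noteq> 0 \<Longrightarrow> f s \<le> C * (D s / s)" "\<And>s. D s = 0 \<Longrightarrow> f s = 0"
  shows "(\<integral>\<^sup>+ s. ennreal (f s) \<partial>lborel) < \<infinity>"
proof -
  have "(\<integral>\<^sup>+ s. ennreal (f s) \<partial>lborel) \<le> (\<integral>\<^sup>+ s. ennreal (max 0 C) * ennreal (D s / s) \<partial>lborel)"
  proof (rule nn_integral_mono)
    fix s
    show "ennreal (f s) \<le> ennreal (max 0 C) * ennreal (D s / s)"
    proof (cases "D s = 0")
      case True then show ?thesis using assms(3) by simp
    next
      case False
      then have s1: "s \<ge> 1" using max_pos by blast
      have "f s \<le> max 0 C * (D s / s)"
        using assms(2)[OF False] D_nn[of s] s1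
        by (smt (verit, best) divide_nonneg_pos mult_right_mono)
      moreover have "ennreal (max 0 C) * ennreal (D s / s) = ennreal (max 0 C * (D s / s))"
        by (rule ennreal_mult[symmetric]) (use s1 D_nn[of s] in auto)
      ultimately show ?thesis by (simp add: ennreal_leI)
    qed
  qed
  also have "\<dots> = ennreal (max 0 C) * (\<integral>\<^sup>+ s. ennreal (D s / s) \<partial>lborel)"
    by (rule nn_integral_cmult) simp
  also have "\<dots> < \<infinity>" using Dfin by (simp add: ennreal_mult_less_top)
  finally show ?thesis .
qed

definition h where "h t = hh d t"

lemma h_int_eq: "(\<integral>\<^sup>+ s\<in>{1..}. ennreal (d s / max t s) \<partial>lborel) = (\<integral>\<^sup>+ s. ennreal (D s / max t s) \<partial>lborel)"
  by (rule nn_integral_cong) (auto simp: D_def indicator_def)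

lemma Dmax_nn: "0 \<le> D s / max t s"
  using max_pos[of s t] D_nn[of s] by (cases "D s = 0") auto

lemma h_fin: "(\<integral>\<^sup>+ s. ennreal (D s / max t s) \<partial>lborel) < \<infinity>"
proof (rule bound_fin[where C=1])
  fix s assume "D s \<noteq> 0"
  then have "max t s \<ge> s" "s \<ge> 1" using max_pos by auto
  then show "D s / max t s \<le> 1 * (D s / s)" using D_nn[of s]
    by (simp add: divide_left_mono)
qed (auto simp: Dmax_nn)

lemma h_E: "ennreal (h t) = (\<integral>\<^sup>+ s. ennreal (D s / max t s) \<partial>lborel)"
  unfolding h_def hh_def h_int_eq using h_fin[of t] by (simp add: ennreal_enn2real_if less_top)

lemma h_nn: "0 \<le> h t" by (simp add: h_def hh_def)

lemma h_anti: assumes "t \<le> t'" shows "h t' \<le> h t"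
proof -
  have "ennreal (h t') \<le> ennreal (h t)" unfolding h_E
  proof (rule nn_integral_mono)
    fix s show "ennreal (D s / max t' s) \<le> ennreal (D s / max t s)"
    proof (cases "D s = 0")
      case False
      then have "s \<ge> 1" using max_pos by auto
      then show ?thesis using assms D_nn[of s]
        by (intro ennreal_leI divide_left_mono) auto
    qed simp
  qed
  then show ?thesis using h_nn by simp
qed

lemma h_meas[measurable]: "h \<in> borel_measurable borel"
proof -
  have "mono (\<lambda>t. - h t)" using h_anti by (auto simp: mono_def)
  then have "(\<lambda>t. - h t) \<in> borel_measurable borel" by (rule borel_measurable_mono)
  then have "(\<lambda>t. - (- h t)) \<in> borel_measurable borel" by measurable
  then show ?thesis by simp
qed

lemma h_le1: "h t \<le> h 1"
proof -
  have "ennreal (h t) \<le> ennreal (h 1)" unfolding h_E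
  proof (rule nn_integral_mono)
    fix s show "ennreal (D s / max t s) \<le> ennreal (D s / max 1 s)"
    proof (cases "D s = 0")
      case False
      then have "s \<ge> 1" using max_pos by auto
      then show ?thesis using D_nn[of s]
        by (intro ennreal_leI divide_left_mono) auto
    qed simp
  qed
  then show ?thesis using h_nn by simp
qed

lemma fin_int:
  fixes f :: "real \<Rightarrow> real"
  assumes [measurable]: "f \<in> borel_measurable borel" and nn: "\<And>x. 0 \<le> f x"
    and fin: "(\<integral>\<^sup>+ s. ennreal (f s) \<partial>lborel) < \<infinity>"
  shows "integrable lborel f" "ennreal (integral\<^sup>L lborel f) = (\<integral>\<^sup>+ s. ennreal (f s) \<partial>lborel)"
proof -
  show "integrable lborel f" by (rule integrableI_nonneg) (use nn fin in auto)
  then show "ennreal (integral\<^sup>L lborel f) = (\<integral>\<^sup>+ s. ennreal (f s) \<partial>lborel)"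
    using nn by (simp add: nn_integral_eq_integral)
qed

lemma h1_nn: "0 \<le> h 1" using h_nn by simp

definition Q where "Q k t = QQ d (int k) t"

lemma Q_int_eq: "(\<integral>\<^sup>+ s\<in>{1..}. ennreal (d s * hh d s ^ k / max t s) \<partial>lborel) = (\<integral>\<^sup>+ s. ennreal (D s * h s ^ k / max t s) \<partial>lborel)"
  by (rule nn_integral_cong) (auto simp: D_def indicator_def h_def)

lemma Qf_nn: "0 \<le> D s * h s ^ k / max t s"
proof -
  have "D s * h s ^ k / max t s = (D s / max t s) * h s ^ k" by simp
  then show ?thesis using mult_nonneg_nonneg[OF Dmax_nn[of s t] zero_le_power[OF h_nn[of s], of k]]
    by (metis times_divide_eq_left)
qed

lemma Q_fin: "(\<integral>\<^sup>+ s. ennreal (D s * h s ^ k / max t s) \<partial>lborel) < \<infinity>"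
proof (rule bound_fin[where C="h 1 ^ k"])
  fix s assume "D s \<noteq> 0"
  then have a: "max t s \<ge> s" "s \<ge> 1" using max_pos by auto
  have "D s * h s ^ k / max t s \<le> D s * h 1 ^ k / max t s"
    using D_nn[of s] h_nn[of s] h_le1[of s] a
    by (intro divide_right_mono mult_left_mono power_mono) auto
  also have "\<dots> \<le> D s * h 1 ^ k / s"
    using D_nn[of s] h1_nn a by (intro divide_left_mono) auto
  finally show "D s * h s ^ k / max t s \<le> h 1 ^ k * (D s / s)" by (simp add: ac_simps)
qed (auto simp: Qf_nn)

lemma Q_E: "ennreal (Q k t) = (\<integral>\<^sup>+ s. ennreal (D s * h s ^ k / max t s) \<partial>lborel)"
  unfolding Q_def QQ_def using Q_fin[of k t] Q_int_eq[of k t] by (simp add: ennreal_enn2real_if less_top)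

lemma Q_nn: "0 \<le> Q k t" by (simp add: Q_def QQ_def)

lemma Q0: "Q 0 t = h t"
proof -
  have "ennreal (Q 0 t) = ennreal (h t)" by (simp add: Q_E h_E)
  then show ?thesis using Q_nn[of 0 t] h_nn[of t] by (simp add: ennreal_inj)
qed

lemma Q_anti: assumes "t \<le> t'" shows "Q k t' \<le> Q k t"
proof -
  have "ennreal (Q k t') \<le> ennreal (Q k t)" unfolding Q_E
  proof (rule nn_integral_mono)
    fix s show "ennreal (D s * h s ^ k / max t' s) \<le> ennreal (D s * h s ^ k / max t s)"
    proof (cases "D s = 0")
      case False
      then have "s \<ge> 1" using max_pos by auto
      then show ?thesis using assms D_nn[of s] h_nn[of s]
        by (intro ennreal_leI divide_left_mono) auto
    qed simp
  qed
  then show ?thesis using Q_nn by simp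
qed

lemma Q_meas[measurable]: "Q k \<in> borel_measurable borel"
proof -
  have "mono (\<lambda>t. - Q k t)" using Q_anti by (auto simp: mono_def)
  then have "(\<lambda>t. - Q k t) \<in> borel_measurable borel" by (rule borel_measurable_mono)
  then have "(\<lambda>t. - (- Q k t)) \<in> borel_measurable borel" by measurable
  then show ?thesis by simp
qed

lemma Q_B: "integrable lborel (\<lambda>s. D s * h s ^ k / max t s)" "Q k t = (\<integral> s. D s * h s ^ k / max t s \<partial>lborel)"
proof -
  show "integrable lborel (\<lambda>s. D s * h s ^ k / max t s)"
    by (rule fin_int(1)[OF _ _ Q_fin]) (auto simp: Qf_nn)
  have "ennreal (Q k t) = ennreal (\<integral> s. D s * h s ^ k / max t s \<partial>lborel)"
    unfolding Q_E by (rule fin_int(2)[OF _ _ Q_fin, symmetric]) (auto simp: Qf_nn)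
  then show "Q k t = (\<integral> s. D s * h s ^ k / max t s \<partial>lborel)"
    using Q_nn by (simp add: Qf_nn integral_nonneg)
qed

definition N where "N k t = NN d k t"

lemma Nf_nn: "0 \<le> indicator {..t} s * D s * h s ^ k"
  using D_nn[of s] h_nn[of s] by (simp add: mult_nonneg_nonneg)

lemma N_fin: "(\<integral>\<^sup>+ s. ennreal (indicator {..t} s * D s * h s ^ k) \<partial>lborel) < \<infinity>"
proof (rule bound_fin[where C="max 1 t * h 1 ^ k"])
  fix s assume "D s \<noteq> 0"
  then have a: "s \<ge> 1" using max_pos by auto
  show "indicator {..t} s * D s * h s ^ k \<le> max 1 t * h 1 ^ k * (D s / s)"
  proof (cases "s \<le> t")
    case True
    have "indicator {..t} s * D s * h s ^ k = D s * h s ^ k" using True by simp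
    also have "\<dots> \<le> D s * h 1 ^ k"
      using D_nn[of s] h_nn[of s] h_le1[of s] by (intro mult_left_mono power_mono) auto
    also have "\<dots> = (s * h 1 ^ k) * (D s / s)" using a by simp
    also have "\<dots> \<le> max 1 t * h 1 ^ k * (D s / s)"
      using a True D_nn[of s] h1_nn by (intro mult_right_mono) auto
    finally show ?thesis .
  next
    case False then show ?thesis using a D_nn[of s] h1_nn by simp
  qed
qed (auto simp: Nf_nn)

lemma N_B: "integrable lborel (\<lambda>s. indicator {..t} s * D s * h s ^ k)"
    "N k t = (\<integral> s. indicator {..t} s * D s * h s ^ k \<partial>lborel)"
proof -
  show "integrable lborel (\<lambda>s. indicator {..t} s * D s * h s ^ k)"
    by (rule fin_int(1)[OF _ _ N_fin]) (auto simp: Nf_nn)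
  show "N k t = (\<integral> s. indicator {..t} s * D s * h s ^ k \<partial>lborel)"
    unfolding N_def NN_def set_lebesgue_integral_def
    by (rule Bochner_Integration.integral_cong) (auto simp: indicator_def D_def h_def)
qed

lemma N_E: "ennreal (N k t) = (\<integral>\<^sup>+ s. ennreal (indicator {..t} s * D s * h s ^ k) \<partial>lborel)"
  unfolding N_B(2) by (rule fin_int(2)[OF _ _ N_fin]) (auto simp: Nf_nn)

lemma N_nn: "0 \<le> N k t"
  unfolding N_B(2) by (rule Bochner_Integration.integral_nonneg) (simp add: Nf_nn)

lemma N_mono: assumes "t \<le> t'" shows "N k t \<le> N k t'"
proof -
  have "ennreal (N k t) \<le> ennreal (N k t')" unfolding N_E
    by (rule nn_integral_mono) (use assms D_nn h_nn in \<open>auto intro!: ennreal_leI simp: indicator_def\<close>)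
  then show ?thesis using N_nn by simp
qed

lemma N_meas[measurable]: "N k \<in> borel_measurable borel"
  by (rule borel_measurable_mono) (auto simp: mono_def N_mono)

lemma N_swap:
  assumes [measurable]: "g \<in> borel_measurable borel" and gnn: "\<And>x. 0 \<le> g x"
  shows "(\<integral>\<^sup>+ s. ennreal (g s * N k s) \<partial>lborel)
       = (\<integral>\<^sup>+ u. ennreal (D u * h u ^ k) * (\<integral>\<^sup>+ s. ennreal (g s * indicator {u..} s) \<partial>lborel) \<partial>lborel)"
proof -
  have "(\<integral>\<^sup>+ s. ennreal (g s * N k s) \<partial>lborel)
      = (\<integral>\<^sup>+ s. ennreal (g s) * (\<integral>\<^sup>+ u. ennreal (D u * h u ^ k * indicator {..s} u) \<partial>lborel) \<partial>lborel)"
  proof (rule nn_integral_cong)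
    fix s
    have "ennreal (g s * N k s) = ennreal (g s) * ennreal (N k s)"
      using gnn N_nn by (simp add: ennreal_mult)
    also have "ennreal (N k s) = (\<integral>\<^sup>+ u. ennreal (D u * h u ^ k * indicator {..s} u) \<partial>lborel)"
      unfolding N_E by (rule nn_integral_cong) (simp add: mult_ac)
    finally show "ennreal (g s * N k s) = ennreal (g s) * (\<integral>\<^sup>+ u. ennreal (D u * h u ^ k * indicator {..s} u) \<partial>lborel)" .
  qed
  also have "\<dots> = (\<integral>\<^sup>+ u. ennreal (D u * h u ^ k) * (\<integral>\<^sup>+ s. ennreal (g s * indicator {u..} s) \<partial>lborel) \<partial>lborel)"
    by (rule tri_swap) (auto simp: gnn D_nn h_nn)
  finally show ?thesis .
qed

lemma kern:
  assumes "0 < t"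
  shows "(\<integral>\<^sup>+ s. ennreal (indicator {t..} s / s\<^sup>2 * N k s) \<partial>lborel) = ennreal (Q k t)"
proof -
  have "(\<integral>\<^sup>+ s. ennreal (indicator {t..} s / s\<^sup>2 * N k s) \<partial>lborel)
     = (\<integral>\<^sup>+ u. ennreal (D u * h u ^ k) * (\<integral>\<^sup>+ s. ennreal (indicator {t..} s / s\<^sup>2 * indicator {u..} s) \<partial>lborel) \<partial>lborel)"
    by (rule N_swap) auto
  also have "\<dots> = (\<integral>\<^sup>+ u. ennreal (D u * h u ^ k) * ennreal (1 / max t u) \<partial>lborel)"
  proof (rule nn_integral_cong)
    fix u
    have "(\<integral>\<^sup>+ s. ennreal (indicator {t..} s / s\<^sup>2 * indicator {u..} s) \<partial>lborel)
        = (\<integral>\<^sup>+ s. ennreal (indicator {max t u..} s / s\<^sup>2) \<partial>lborel)"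
      by (rule nn_integral_cong) (auto simp: indicator_def)
    also have "\<dots> = ennreal (1 / max t u)" using assms by (intro inv_sq) auto
    finally show "ennreal (D u * h u ^ k) * (\<integral>\<^sup>+ s. ennreal (indicator {t..} s / s\<^sup>2 * indicator {u..} s) \<partial>lborel)
       = ennreal (D u * h u ^ k) * ennreal (1 / max t u)" by simp
  qed
  also have "\<dots> = ennreal (Q k t)" unfolding Q_E
    by (rule nn_integral_cong) (use assms D_nn h_nn in \<open>auto simp: ennreal_mult[symmetric]\<close>)
  finally show ?thesis .
qed

lemma kern_open:
  assumes "0 < t"
  shows "(\<integral>\<^sup>+ s. ennreal (indicator {t<..} s / s\<^sup>2 * N k s) \<partial>lborel) = ennreal (Q k t)"
  using open_closed_ray[of t "\<lambda>s. N k s / s\<^sup>2"] kern[OF assms, of k] by simp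

lemma pt_cong:
  fixes F G :: "real \<Rightarrow> real"
  assumes "\<And>r. r \<noteq> c \<Longrightarrow> F r = G r"
  shows "(\<integral>\<^sup>+ r. ennreal (F r) \<partial>lborel) = (\<integral>\<^sup>+ r. ennreal (G r) \<partial>lborel)"
proof (rule nn_integral_cong_AE)
  show "AE r in lborel. ennreal (F r) = ennreal (G r)"
    using AE_lborel_singleton[of c] by eventually_elim (use assms in auto)
qed

lemma hdiff:
  assumes "1 \<le> u" "u \<le> t"
  shows "(\<integral>\<^sup>+ s. ennreal (indicator {u..t} s / s\<^sup>2 * N 0 s) \<partial>lborel) = ennreal (h u - h t)"
proof -
  have "ennreal (h u) = (\<integral>\<^sup>+ s. ennreal (indicator {u..} s / s\<^sup>2 * N 0 s) \<partial>lborel)"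
    using kern[of u 0] assms by (simp add: Q0)
  also have "\<dots> = (\<integral>\<^sup>+ s. ennreal (indicator {u..t} s / s\<^sup>2 * N 0 s) + ennreal (indicator {t<..} s / s\<^sup>2 * N 0 s) \<partial>lborel)"
    by (rule nn_integral_cong) (use assms N_nn in \<open>auto simp: indicator_def ennreal_plus[symmetric] simp del: ennreal_plus\<close>)
  also have "\<dots> = (\<integral>\<^sup>+ s. ennreal (indicator {u..t} s / s\<^sup>2 * N 0 s) \<partial>lborel) + ennreal (h t)"
    using kern_open[of t 0] assms by (subst nn_integral_add) (auto simp: Q0)
  finally have "ennreal (h u) = (\<integral>\<^sup>+ s. ennreal (indicator {u..t} s / s\<^sup>2 * N 0 s) \<partial>lborel) + ennreal (h t)" .
  then show ?thesis using h_nn[of t] by (metis add_diff_eq_iff_ennreal ennreal_minus ennreal_plus h_anti assms(2) h_nn diff_add_cancel ennreal_add_diff_cancel_right ennreal_neq_top)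
qed

lemma Npart:
  assumes "t \<le> r"
  shows "(\<integral>\<^sup>+ s. ennreal (indicator {t..r} s * D s * h s ^ k) \<partial>lborel) = ennreal (N k r - N k t)"
proof -
  have "ennreal (N k r) = (\<integral>\<^sup>+ s. ennreal (indicator {..<t} s * D s * h s ^ k) + ennreal (indicator {t..r} s * D s * h s ^ k) \<partial>lborel)"
    unfolding N_E
    by (rule nn_integral_cong) (use assms D_nn h_nn in \<open>auto simp: indicator_def ennreal_plus[symmetric] simp del: ennreal_plus\<close>)
  also have "\<dots> = (\<integral>\<^sup>+ s. ennreal (indicator {..<t} s * D s * h s ^ k) \<partial>lborel) + (\<integral>\<^sup>+ s. ennreal (indicator {t..r} s * D s * h s ^ k) \<partial>lborel)"
    by (rule nn_integral_add) auto
  also have "(\<integral>\<^sup>+ s. ennreal (indicator {..<t} s * D s * h s ^ k) \<partial>lborel) = ennreal (N k t)"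
    unfolding N_E by (rule pt_cong[where c=t]) (auto simp: indicator_def)
  finally have "ennreal (N k r) = ennreal (N k t) + (\<integral>\<^sup>+ s. ennreal (indicator {t..r} s * D s * h s ^ k) \<partial>lborel)" .
  then show ?thesis using N_nn[of k t]
    by (metis add.commute add_diff_eq_iff_ennreal ennreal_minus ennreal_plus N_mono assms N_nn diff_add_cancel ennreal_add_diff_cancel_right ennreal_neq_top)
qed

lemma Nh: "N i t * h t ^ j \<le> N (i + j) t"
proof -
  have "N i t * h t ^ j = (\<integral> s. indicator {..t} s * D s * h s ^ i * h t ^ j \<partial>lborel)"
    unfolding N_B(2) by (simp add: integral_mult_left_zero)
  also have "\<dots> \<le> (\<integral> s. indicator {..t} s * D s * h s ^ (i + j) \<partial>lborel)"
  proof (rule integral_mono)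
    show "integrable lborel (\<lambda>s. indicator {..t} s * D s * h s ^ i * h t ^ j)"
      using N_B(1)[of t i] by simp
    show "integrable lborel (\<lambda>s. indicator {..t} s * D s * h s ^ (i + j))"
      using N_B(1) by simp
    fix s
    show "indicator {..t} s * D s * h s ^ i * h t ^ j \<le> indicator {..t} s * D s * h s ^ (i + j)"
    proof (cases "s \<le> t")
      case True
      then have "h t ^ j \<le> h s ^ j" using h_anti h_nn by (intro power_mono) auto
      then have "(D s * h s ^ i) * h t ^ j \<le> (D s * h s ^ i) * h s ^ j"
        using D_nn h_nn by (intro mult_left_mono) auto
      then show ?thesis using True by (simp add: power_add mult_ac)
    qed simp
  qed
  finally show ?thesis unfolding N_B(2) .
qed

lemma c7: "h t * N k t \<le> N (k + 1) t"
  using Nh[of k t 1] by (simp add: mult.commute)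

lemma c5: "N i t * N j t \<le> N 0 t * N (i + j) t"
proof -
  have "(\<integral> x. indicator {..t} x * D x * h x ^ i \<partial>lborel) * (\<integral> x. indicator {..t} x * D x * h x ^ j \<partial>lborel)
      \<le> (\<integral> x. indicator {..t} x * D x \<partial>lborel) * (\<integral> x. indicator {..t} x * D x * h x ^ (i + j) \<partial>lborel)"
    by (rule cheb[where C="h 1"]) (use D_nn h_nn h_le1 N_B(1)[of t 0] in auto)
  then show ?thesis unfolding N_B(2) by simp
qed

lemma c8: "Q i t * Q j t \<le> h t * Q (i + j) t"
proof -
  have e: "Q k t = (\<integral> x. D x / max t x * h x ^ k \<partial>lborel)" for k
    unfolding Q_B(2) by (rule Bochner_Integration.integral_cong) auto
  have "(\<integral> x. D x / max t x * h x ^ i \<partial>lborel) * (\<integral> x. D x / max t x * h x ^ j \<partial>lborel)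
      \<le> (\<integral> x. D x / max t x \<partial>lborel) * (\<integral> x. D x / max t x * h x ^ (i + j) \<partial>lborel)"
    by (rule cheb[where C="h 1"]) (use Dmax_nn h_nn h_le1 Q_B(1)[of 0 t] in auto)
  then show ?thesis unfolding e[symmetric] using e[of 0] by (simp add: Q0)
qed

definition G where "G k t = Q k t - N k t / t"

lemma G_B:
  assumes "1 \<le> t"
  shows "G k t = (\<integral> s. indicator {t<..} s * D s * h s ^ k / s \<partial>lborel)"
    "integrable lborel (\<lambda>s. indicator {t<..} s * D s * h s ^ k / s)"
proof -
  have eq: "(\<lambda>s. indicator {t<..} s * D s * h s ^ k / s) = (\<lambda>s. D s * h s ^ k / max t s - indicator {..t} s * D s * h s ^ k / t)"
    using assms by (auto simp: indicator_def fun_eq_iff max_def)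
  show "integrable lborel (\<lambda>s. indicator {t<..} s * D s * h s ^ k / s)"
    unfolding eq using Q_B(1) N_B(1) by (intro Bochner_Integration.integrable_diff integrable_divide) auto
  show "G k t = (\<integral> s. indicator {t<..} s * D s * h s ^ k / s \<partial>lborel)"
    unfolding eq G_def using Q_B N_B
    by (subst Bochner_Integration.integral_diff) (auto intro: integrable_divide)
qed

lemma Gf_nn: "1 \<le> t \<Longrightarrow> 0 \<le> indicator {t<..} s * D s * h s ^ k / s"
  using D_nn[of s] h_nn[of s] by (cases "t < s") (auto intro!: divide_nonneg_pos mult_nonneg_nonneg)

lemma G_nn: "1 \<le> t \<Longrightarrow> 0 \<le> G k t"
  unfolding G_B by (rule Bochner_Integration.integral_nonneg) (use Gf_nn in auto)

lemma G_le: assumes "1 \<le> t" shows "G k t \<le> h t ^ k * G 0 t"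
proof -
  have "G k t \<le> (\<integral> s. h t ^ k * (indicator {t<..} s * D s * h s ^ 0 / s) \<partial>lborel)"
    unfolding G_B[OF assms]
  proof (rule integral_mono)
    show "integrable lborel (\<lambda>s. h t ^ k * (indicator {t<..} s * D s * h s ^ 0 / s))"
      by (rule Bochner_Integration.integrable_mult_right[OF G_B(2)[OF assms, of 0]])
    show "integrable lborel (\<lambda>s. indicator {t<..} s * D s * h s ^ k / s)" using G_B(2)[OF assms] .
    fix s
    show "indicator {t<..} s * D s * h s ^ k / s \<le> h t ^ k * (indicator {t<..} s * D s * h s ^ 0 / s)"
    proof (cases "t < s")
      case True
      then have "h s ^ k \<le> h t ^ k" using h_anti h_nn by (intro power_mono) auto
      then have "D s * h s ^ k / s \<le> D s * h t ^ k / s"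
        using D_nn True assms by (intro divide_right_mono mult_left_mono) auto
      then show ?thesis using True by (simp add: mult_ac)
    qed simp
  qed
  also have "\<dots> = h t ^ k * G 0 t" unfolding G_B[OF assms] by (rule integral_mult_right_zero)
  finally show ?thesis .
qed

lemma c6: assumes "1 \<le> t" shows "N i t * Q j t \<le> h t * N (i + j) t"
proof -
  have Qd: "Q j t = N j t / t + G j t" and hd: "h t = N 0 t / t + G 0 t"
    using Q0[of t] by (auto simp: G_def)
  have "N i t * Q j t = (N i t * N j t) / t + N i t * G j t" unfolding Qd by (simp add: algebra_simps)
  also have "\<dots> \<le> (N 0 t * N (i + j) t) / t + N i t * (h t ^ j * G 0 t)"
    using c5[of i t j] G_le[OF assms, of j] N_nn[of i t] assms
    by (intro add_mono divide_right_mono mult_left_mono) auto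
  also have "N i t * (h t ^ j * G 0 t) = (N i t * h t ^ j) * G 0 t" by simp
  also have "\<dots> \<le> N (i + j) t * G 0 t"
    using Nh[of i t j] G_nn[OF assms] by (intro mult_right_mono) auto
  also have "(N 0 t * N (i + j) t) / t + N (i + j) t * G 0 t = h t * N (i + j) t"
    unfolding hd by (simp add: algebra_simps)
  finally show ?thesis by simp
qed

lemma N_below: "r < 1 \<Longrightarrow> N k r = 0"
  unfolding N_B(2) by (rule integral_eq_zero_AE) (auto simp: indicator_def D_out)

lemma Q_swap:
  assumes [measurable]: "w \<in> borel_measurable borel" and wnn: "\<And>x. 0 \<le> w x" and w0: "\<And>x. x < 1 \<Longrightarrow> w x = 0"
  shows "(\<integral>\<^sup>+ s. ennreal (w s * Q k s) \<partial>lborel)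
       = (\<integral>\<^sup>+ r. ennreal (N k r / r\<^sup>2) * (\<integral>\<^sup>+ s. ennreal (w s * indicator {..r} s) \<partial>lborel) \<partial>lborel)"
proof -
  have "(\<integral>\<^sup>+ s. ennreal (w s * Q k s) \<partial>lborel)
      = (\<integral>\<^sup>+ s. ennreal (w s) * (\<integral>\<^sup>+ r. ennreal (N k r / r\<^sup>2 * indicator {s..} r) \<partial>lborel) \<partial>lborel)"
  proof (rule nn_integral_cong)
    fix s
    show "ennreal (w s * Q k s) = ennreal (w s) * (\<integral>\<^sup>+ r. ennreal (N k r / r\<^sup>2 * indicator {s..} r) \<partial>lborel)"
    proof (cases "s < 1")
      case True then show ?thesis using w0 by simp
    next
      case False
      have "ennreal (Q k s) = (\<integral>\<^sup>+ r. ennreal (indicator {s..} r / r\<^sup>2 * N k r) \<partial>lborel)"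
        using kern[of s k] False by simp
      also have "\<dots> = (\<integral>\<^sup>+ r. ennreal (N k r / r\<^sup>2 * indicator {s..} r) \<partial>lborel)"
        by (rule nn_integral_cong) (auto simp: indicator_def)
      finally have "ennreal (Q k s) = (\<integral>\<^sup>+ r. ennreal (N k r / r\<^sup>2 * indicator {s..} r) \<partial>lborel)" .
      then show ?thesis using wnn Q_nn by (simp add: ennreal_mult)
    qed
  qed
  also have "\<dots> = (\<integral>\<^sup>+ r. ennreal (N k r / r\<^sup>2) * (\<integral>\<^sup>+ s. ennreal (w s * indicator {..r} s) \<partial>lborel) \<partial>lborel)"
    by (rule tri_swap[symmetric]) (auto simp: wnn N_nn)
  finally show ?thesis .
qed

lemma c2F_nn: "0 \<le> indicator {..t} u * D u * h u ^ (m + 1) - h t * (indicator {..t} u * D u * h u ^ m)"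
proof (cases "u \<le> t")
  case True
  have "h t * (D u * h u ^ m) \<le> h u * (D u * h u ^ m)"
    using h_anti[OF True] D_nn[of u] h_nn[of u] by (intro mult_right_mono) auto
  then show ?thesis using True by (simp add: algebra_simps)
qed simp

lemma c2E:
  assumes "1 \<le> t"
  shows "(\<integral>\<^sup>+ s. ennreal (indicator {1..t} s / s\<^sup>2 * N 0 s * N m s) \<partial>lborel) = ennreal (N (m + 1) t - h t * N m t)"
proof -
  have "(\<integral>\<^sup>+ s. ennreal (indicator {1..t} s / s\<^sup>2 * N 0 s * N m s) \<partial>lborel)
      = (\<integral>\<^sup>+ u. ennreal (D u * h u ^ m) * (\<integral>\<^sup>+ s. ennreal (indicator {1..t} s / s\<^sup>2 * N 0 s * indicator {u..} s) \<partial>lborel) \<partial>lborel)"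
    by (rule N_swap) (auto simp: N_nn)
  also have "\<dots> = (\<integral>\<^sup>+ u. ennreal (indicator {..t} u * D u * h u ^ (m + 1) - h t * (indicator {..t} u * D u * h u ^ m)) \<partial>lborel)"
  proof (rule nn_integral_cong)
    fix u
    show "ennreal (D u * h u ^ m) * (\<integral>\<^sup>+ s. ennreal (indicator {1..t} s / s\<^sup>2 * N 0 s * indicator {u..} s) \<partial>lborel)
        = ennreal (indicator {..t} u * D u * h u ^ (m + 1) - h t * (indicator {..t} u * D u * h u ^ m))"
    proof (cases "D u = 0")
      case True then show ?thesis by simp
    next
      case False
      then have u1: "1 \<le> u" using max_pos by blast
      show ?thesis
      proof (cases "u \<le> t")
        case True
        have "(\<integral>\<^sup>+ s. ennreal (indicator {1..t} s / s\<^sup>2 * N 0 s * indicator {u..} s) \<partial>lborel)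
            = (\<integral>\<^sup>+ s. ennreal (indicator {u..t} s / s\<^sup>2 * N 0 s) \<partial>lborel)"
          by (rule nn_integral_cong) (use u1 in \<open>auto simp: indicator_def\<close>)
        also have "\<dots> = ennreal (h u - h t)" by (rule hdiff[OF u1 True])
        finally show ?thesis using True D_nn[of u] h_nn[of u] h_anti[OF True]
          by (simp add: ennreal_mult[symmetric] algebra_simps)
      next
        case False
        have "(\<integral>\<^sup>+ s. ennreal (indicator {1..t} s / s\<^sup>2 * N 0 s * indicator {u..} s) \<partial>lborel) = (\<integral>\<^sup>+ s. (0::ennreal) \<partial>(lborel::real measure))"
          by (rule nn_integral_cong) (use False in \<open>auto simp: indicator_def\<close>)
        then show ?thesis using False by simp
      qed
    qed
  qed
  also have "\<dots> = ennreal (\<integral> u. indicator {..t} u * D u * h u ^ (m + 1) - h t * (indicator {..t} u * D u * h u ^ m) \<partial>lborel)"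
  proof (rule nn_integral_eq_integral)
    show "integrable lborel (\<lambda>u. indicator {..t} u * D u * h u ^ (m + 1) - h t * (indicator {..t} u * D u * h u ^ m))"
      by (intro Bochner_Integration.integrable_diff Bochner_Integration.integrable_mult_right N_B(1))
  qed (use c2F_nn in auto)
  also have "(\<integral> u. indicator {..t} u * D u * h u ^ (m + 1) - h t * (indicator {..t} u * D u * h u ^ m) \<partial>lborel)
      = N (m + 1) t - h t * N m t"
    unfolding N_B(2) using N_B(1)[of t "m + 1"] N_B(1)[of t m]
    by (subst Bochner_Integration.integral_diff) (auto simp del: power_Suc)
  finally show ?thesis .
qed

lemma c4E:
  assumes "1 \<le> t"
  shows "(\<integral>\<^sup>+ s. ennreal (indicator {t..} s / s\<^sup>2 * N 0 s * N m s) \<partial>lborel)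
       = (\<integral>\<^sup>+ u. ennreal (h (max t u) * D u * h u ^ m) \<partial>lborel)"
proof -
  have "(\<integral>\<^sup>+ s. ennreal (indicator {t..} s / s\<^sup>2 * N 0 s * N m s) \<partial>lborel)
      = (\<integral>\<^sup>+ u. ennreal (D u * h u ^ m) * (\<integral>\<^sup>+ s. ennreal (indicator {t..} s / s\<^sup>2 * N 0 s * indicator {u..} s) \<partial>lborel) \<partial>lborel)"
    by (rule N_swap) (auto simp: N_nn)
  also have "\<dots> = (\<integral>\<^sup>+ u. ennreal (h (max t u) * D u * h u ^ m) \<partial>lborel)"
  proof (rule nn_integral_cong)
    fix u
    have "(\<integral>\<^sup>+ s. ennreal (indicator {t..} s / s\<^sup>2 * N 0 s * indicator {u..} s) \<partial>lborel)
        = (\<integral>\<^sup>+ s. ennreal (indicator {max t u..} s / s\<^sup>2 * N 0 s) \<partial>lborel)"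
      by (rule nn_integral_cong) (auto simp: indicator_def)
    also have "\<dots> = ennreal (h (max t u))" using kern[of "max t u" 0] assms by (simp add: Q0)
    finally show "ennreal (D u * h u ^ m) * (\<integral>\<^sup>+ s. ennreal (indicator {t..} s / s\<^sup>2 * N 0 s * indicator {u..} s) \<partial>lborel)
       = ennreal (h (max t u) * D u * h u ^ m)"
      using D_nn[of u] h_nn by (simp add: ennreal_mult[symmetric] mult_ac)
  qed
  finally show ?thesis .
qed

lemma I1: "(\<integral>\<^sup>+ s. ennreal (indicator {t..} s * D s * h s ^ j * indicator {..r} s) \<partial>lborel)
         = ennreal (indicator {t..} r * (N j r - N j t))"
proof (cases "t \<le> r")
  case True
  have "(\<integral>\<^sup>+ s. ennreal (indicator {t..} s * D s * h s ^ j * indicator {..r} s) \<partial>lborel)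
      = (\<integral>\<^sup>+ s. ennreal (indicator {t..r} s * D s * h s ^ j) \<partial>lborel)"
    by (rule nn_integral_cong) (auto simp: indicator_def)
  then show ?thesis using Npart[OF True] True by simp
next
  case False
  have "(\<integral>\<^sup>+ s. ennreal (indicator {t..} s * D s * h s ^ j * indicator {..r} s) \<partial>lborel) = (\<integral>\<^sup>+ s. (0::ennreal) \<partial>(lborel::real measure))"
    by (rule nn_integral_cong) (use False in \<open>auto simp: indicator_def\<close>)
  then show ?thesis using False by simp
qed

lemma I2: "(\<integral>\<^sup>+ s. ennreal (indicator {1..t} s * D s * h s ^ j * indicator {..r} s) \<partial>lborel)
         = ennreal (N j (min r t))"
  unfolding N_E by (rule nn_integral_cong) (auto simp: indicator_def D_out)

lemma I3: assumes "1 \<le> t"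
  shows "(\<integral>\<^sup>+ s. ennreal (indicator {t..} s / s\<^sup>2 * N 0 s * indicator {..r} s) \<partial>lborel)
         = ennreal (indicator {t..} r * (h t - h r))"
proof (cases "t \<le> r")
  case True
  have "(\<integral>\<^sup>+ s. ennreal (indicator {t..} s / s\<^sup>2 * N 0 s * indicator {..r} s) \<partial>lborel)
      = (\<integral>\<^sup>+ s. ennreal (indicator {t..r} s / s\<^sup>2 * N 0 s) \<partial>lborel)"
    by (rule nn_integral_cong) (auto simp: indicator_def)
  then show ?thesis using hdiff[OF assms True] True by simp
next
  case False
  have "(\<integral>\<^sup>+ s. ennreal (indicator {t..} s / s\<^sup>2 * N 0 s * indicator {..r} s) \<partial>lborel) = (\<integral>\<^sup>+ s. (0::ennreal) \<partial>(lborel::real measure))"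
    by (rule nn_integral_cong) (use False in \<open>auto simp: indicator_def\<close>)
  then show ?thesis using False by simp
qed

lemma kern_le:
  assumes "1 \<le> t" and F: "\<And>r. t \<le> r \<Longrightarrow> F r \<le> N k r" and Fnn: "\<And>r. 0 \<le> F r"
  shows "(\<integral>\<^sup>+ r. ennreal (indicator {t..} r / r\<^sup>2 * F r) \<partial>lborel) \<le> ennreal (Q k t)"
proof -
  have "(\<integral>\<^sup>+ r. ennreal (indicator {t..} r / r\<^sup>2 * F r) \<partial>lborel) \<le> (\<integral>\<^sup>+ r. ennreal (indicator {t..} r / r\<^sup>2 * N k r) \<partial>lborel)"
    by (rule nn_integral_mono) (auto simp: indicator_def F intro!: ennreal_leI divide_right_mono)
  also have "\<dots> = ennreal (Q k t)" using kern assms by simp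
  finally show ?thesis .
qed

lemma c9: assumes "1 \<le> t" shows "h t * Q k t \<le> 2 * Q (k + 1) t"
proof -
  have "ennreal (h t * Q k t) = ennreal (h t) * (\<integral>\<^sup>+ r. ennreal (indicator {t..} r / r\<^sup>2 * N k r) \<partial>lborel)"
    using kern[of t k] assms h_nn Q_nn by (simp add: ennreal_mult)
  also have "\<dots> = (\<integral>\<^sup>+ r. ennreal (h t) * ennreal (indicator {t..} r / r\<^sup>2 * N k r) \<partial>lborel)"
    by (rule nn_integral_cmult[symmetric]) simp
  also have "\<dots> = (\<integral>\<^sup>+ r. ennreal (indicator {t..} r / r\<^sup>2 * (h r * N k r)) + ennreal (N k r / r\<^sup>2) * ennreal (indicator {t..} r * (h t - h r)) \<partial>lborel)"
  proof (rule nn_integral_cong)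
    fix r
    show "ennreal (h t) * ennreal (indicator {t..} r / r\<^sup>2 * N k r)
      = ennreal (indicator {t..} r / r\<^sup>2 * (h r * N k r)) + ennreal (N k r / r\<^sup>2) * ennreal (indicator {t..} r * (h t - h r))"
    proof (cases "t \<le> r")
      case True
      have "ennreal (h t) * ennreal (indicator {t..} r / r\<^sup>2 * N k r) = ennreal (h t * (N k r / r\<^sup>2))"
        using True h_nn N_nn by (simp add: ennreal_mult[symmetric])
      also have "h t * (N k r / r\<^sup>2) = h r * (N k r / r\<^sup>2) + (N k r / r\<^sup>2) * (h t - h r)"
        by (simp add: algebra_simps diff_divide_distrib)
      also have "ennreal \<dots> = ennreal (h r * (N k r / r\<^sup>2)) + ennreal ((N k r / r\<^sup>2) * (h t - h r))"
        using h_anti[OF True] h_nn N_nn by (intro ennreal_plus) auto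
      finally show ?thesis using True h_anti[OF True] h_nn N_nn
        by (simp add: ennreal_mult[symmetric] mult_ac)
    qed simp
  qed
  also have "\<dots> = (\<integral>\<^sup>+ r. ennreal (indicator {t..} r / r\<^sup>2 * (h r * N k r)) \<partial>lborel)
      + (\<integral>\<^sup>+ r. ennreal (N k r / r\<^sup>2) * ennreal (indicator {t..} r * (h t - h r)) \<partial>lborel)"
    by (rule nn_integral_add) auto
  also have "(\<integral>\<^sup>+ r. ennreal (N k r / r\<^sup>2) * ennreal (indicator {t..} r * (h t - h r)) \<partial>lborel)
      = (\<integral>\<^sup>+ s. ennreal (indicator {t..} s / s\<^sup>2 * N 0 s * Q k s) \<partial>lborel)"
  proof -
    have "(\<integral>\<^sup>+ s. ennreal (indicator {t..} s / s\<^sup>2 * N 0 s * Q k s) \<partial>lborel)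
      = (\<integral>\<^sup>+ r. ennreal (N k r / r\<^sup>2) * (\<integral>\<^sup>+ s. ennreal (indicator {t..} s / s\<^sup>2 * N 0 s * indicator {..r} s) \<partial>lborel) \<partial>lborel)"
      by (rule Q_swap) (use assms N_nn in \<open>auto simp: indicator_def\<close>)
    then show ?thesis unfolding I3[OF assms] by simp
  qed
  also have "\<dots> = (\<integral>\<^sup>+ s. ennreal (indicator {t..} s / s\<^sup>2 * (N 0 s * Q k s)) \<partial>lborel)"
    by (simp add: mult_ac)
  also have "(\<integral>\<^sup>+ r. ennreal (indicator {t..} r / r\<^sup>2 * (h r * N k r)) \<partial>lborel) \<le> ennreal (Q (k + 1) t)"
    by (rule kern_le[OF assms]) (use c7 h_nn N_nn in auto)
  also have "(\<integral>\<^sup>+ s. ennreal (indicator {t..} s / s\<^sup>2 * (N 0 s * Q k s)) \<partial>lborel) \<le> ennreal (Q (k + 1) t)"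
  proof (rule kern_le[OF assms])
    fix r assume r: "t \<le> r"
    have "N 0 r * Q k r \<le> h r * N (0 + k) r" using c6[of r 0 k] r assms by simp
    also have "\<dots> \<le> N (k + 1) r" using c7 by simp
    finally show "N 0 r * Q k r \<le> N (k + 1) r" .
  qed (use N_nn Q_nn in auto)
  finally have "ennreal (h t * Q k t) \<le> ennreal (2 * Q (k + 1) t)"
    using Q_nn by (simp add: ennreal_plus[symmetric] del: ennreal_plus)
  then show ?thesis using Q_nn by simp
qed

lemma X1_le: assumes "t \<le> r" shows "N 1 r - N 1 t \<le> h t * (N 0 r - N 0 t)"
proof -
  have "ennreal (N 1 r - N 1 t) = (\<integral>\<^sup>+ s. ennreal (indicator {t..r} s * D s * h s ^ 1) \<partial>lborel)"
    using Npart[OF assms, of 1] by simp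
  also have "\<dots> \<le> (\<integral>\<^sup>+ s. ennreal (h t) * ennreal (indicator {t..r} s * D s * h s ^ 0) \<partial>lborel)"
  proof (rule nn_integral_mono)
    fix s
    show "ennreal (indicator {t..r} s * D s * h s ^ 1) \<le> ennreal (h t) * ennreal (indicator {t..r} s * D s * h s ^ 0)"
    proof (cases "s \<in> {t..r}")
      case True
      then have "D s * h s \<le> D s * h t" using h_anti[of t s] D_nn by (intro mult_left_mono) auto
      then show ?thesis using True h_nn D_nn by (simp add: ennreal_mult[symmetric] mult.commute)
    qed simp
  qed
  also have "\<dots> = ennreal (h t) * ennreal (N 0 r - N 0 t)"
    using Npart[OF assms, of 0] by (subst nn_integral_cmult) auto
  also have "\<dots> = ennreal (h t * (N 0 r - N 0 t))"
    using h_nn N_mono[OF assms] by (simp add: ennreal_mult)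
  finally have "ennreal (N 1 r - N 1 t) \<le> ennreal (h t * (N 0 r - N 0 t))" .
  moreover have "0 \<le> h t * (N 0 r - N 0 t)" using h_nn[of t] N_mono[OF assms, of 0] by simp
  ultimately show ?thesis by (simp add: ennreal_le_iff)
qed

lemma P10: assumes "t \<le> r" shows "N k r * (N 1 r - N 1 t) \<le> N (k + 1) r * (N 0 r - N 0 t)"
proof -
  define X0 where "X0 = N 0 r - N 0 t"
  define X1 where "X1 = N 1 r - N 1 t"
  have X0nn: "0 \<le> X0" and X1nn: "0 \<le> X1" using N_mono[OF assms] by (auto simp: X0_def X1_def)
  have X1le: "X1 \<le> h t * X0" using X1_le[OF assms] by (simp add: X0_def X1_def)
  have a: "X1 * N 0 r \<le> X0 * N 1 r"
  proof -
    have "X1 * N 0 r = X1 * N 0 t + X1 * X0" by (simp add: X0_def algebra_simps)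
    also have "X1 * N 0 t \<le> (h t * X0) * N 0 t" using X1le N_nn by (intro mult_right_mono) auto
    also have "(h t * X0) * N 0 t = X0 * (h t * N 0 t)" by simp
    also have "\<dots> \<le> X0 * N 1 t" using c7[of t 0] X0nn by (intro mult_left_mono) auto
    finally have "X1 * N 0 r \<le> X0 * N 1 t + X1 * X0" by simp
    also have "\<dots> = X0 * N 1 r" by (simp add: X1_def algebra_simps)
    finally show ?thesis .
  qed
  show ?thesis
  proof (cases "N 0 r = 0")
    case True
    then have "X0 = 0" using N_mono[OF assms, of 0] N_nn[of 0 t] by (simp add: X0_def)
    then have "X1 = 0" using X1le X1nn by simp
    then show ?thesis using \<open>X0 = 0\<close> by (simp add: X0_def X1_def)
  next
    case False
    then have N0p: "0 < N 0 r" using N_nn[of 0 r] by simp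
    have "N 0 r * (N k r * X1) = N k r * (X1 * N 0 r)" by simp
    also have "\<dots> \<le> N k r * (X0 * N 1 r)" using a N_nn by (intro mult_left_mono) auto
    also have "\<dots> = X0 * (N k r * N 1 r)" by simp
    also have "\<dots> \<le> X0 * (N 0 r * N (k + 1) r)" using c5[of k r 1] X0nn by (intro mult_left_mono) auto
    also have "\<dots> = N 0 r * (N (k + 1) r * X0)" by simp
    finally have "N 0 r * (N k r * X1) \<le> N 0 r * (N (k + 1) r * X0)" .
    then have "N k r * X1 \<le> N (k + 1) r * X0" using N0p by simp
    then show ?thesis by (simp add: X0_def X1_def)
  qed
qed

lemma c10E: assumes "1 \<le> t"
  shows "(\<integral>\<^sup>+ s. ennreal (indicator {t..} s * D s * h s ^ 1 * Q k s) \<partial>lborel)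
       \<le> (\<integral>\<^sup>+ s. ennreal (indicator {t..} s * D s * h s ^ 0 * Q (k + 1) s) \<partial>lborel)"
proof -
  have "(\<integral>\<^sup>+ s. ennreal (indicator {t..} s * D s * h s ^ 1 * Q k s) \<partial>lborel)
      = (\<integral>\<^sup>+ r. ennreal (N k r / r\<^sup>2) * (\<integral>\<^sup>+ s. ennreal (indicator {t..} s * D s * h s ^ 1 * indicator {..r} s) \<partial>lborel) \<partial>lborel)"
    by (rule Q_swap) (use assms D_nn h_nn in \<open>auto simp: indicator_def\<close>)
  also have "\<dots> = (\<integral>\<^sup>+ r. ennreal (N k r / r\<^sup>2) * ennreal (indicator {t..} r * (N 1 r - N 1 t)) \<partial>lborel)"
    unfolding I1 ..
  also have "\<dots> \<le> (\<integral>\<^sup>+ r. ennreal (N (k + 1) r / r\<^sup>2) * ennreal (indicator {t..} r * (N 0 r - N 0 t)) \<partial>lborel)"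
  proof (rule nn_integral_mono)
    fix r
    show "ennreal (N k r / r\<^sup>2) * ennreal (indicator {t..} r * (N 1 r - N 1 t))
        \<le> ennreal (N (k + 1) r / r\<^sup>2) * ennreal (indicator {t..} r * (N 0 r - N 0 t))"
    proof (cases "t \<le> r")
      case True
      have "N k r * (N 1 r - N 1 t) / r\<^sup>2 \<le> N (k + 1) r * (N 0 r - N 0 t) / r\<^sup>2"
        using P10[OF True, of k] by (intro divide_right_mono) auto
      then show ?thesis using True N_nn N_mono[OF True]
        by (simp add: ennreal_mult[symmetric] ennreal_leI)
    qed simp
  qed
  also have "\<dots> = (\<integral>\<^sup>+ r. ennreal (N (k + 1) r / r\<^sup>2) * (\<integral>\<^sup>+ s. ennreal (indicator {t..} s * D s * h s ^ 0 * indicator {..r} s) \<partial>lborel) \<partial>lborel)"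
    unfolding I1 ..
  also have "\<dots> = (\<integral>\<^sup>+ s. ennreal (indicator {t..} s * D s * h s ^ 0 * Q (k + 1) s) \<partial>lborel)"
    by (rule Q_swap[symmetric]) (use assms D_nn h_nn in \<open>auto simp: indicator_def\<close>)
  finally show ?thesis .
qed

lemma c11E: assumes "1 \<le> t"
  shows "(\<integral>\<^sup>+ s. ennreal (indicator {t..} s * D s * h s ^ 0 * Q m s) \<partial>lborel)
       \<le> (\<integral>\<^sup>+ u. ennreal (h (max t u) * D u * h u ^ m) \<partial>lborel)"
proof -
  have "(\<integral>\<^sup>+ s. ennreal (indicator {t..} s * D s * h s ^ 0 * Q m s) \<partial>lborel)
      = (\<integral>\<^sup>+ r. ennreal (N m r / r\<^sup>2) * (\<integral>\<^sup>+ s. ennreal (indicator {t..} s * D s * h s ^ 0 * indicator {..r} s) \<partial>lborel) \<partial>lborel)"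
    by (rule Q_swap) (use assms D_nn h_nn in \<open>auto simp: indicator_def\<close>)
  also have "\<dots> = (\<integral>\<^sup>+ r. ennreal (N m r / r\<^sup>2) * ennreal (indicator {t..} r * (N 0 r - N 0 t)) \<partial>lborel)"
    unfolding I1 ..
  also have "\<dots> \<le> (\<integral>\<^sup>+ s. ennreal (indicator {t..} s / s\<^sup>2 * N 0 s * N m s) \<partial>lborel)"
  proof (rule nn_integral_mono)
    fix r
    show "ennreal (N m r / r\<^sup>2) * ennreal (indicator {t..} r * (N 0 r - N 0 t))
        \<le> ennreal (indicator {t..} r / r\<^sup>2 * N 0 r * N m r)"
    proof (cases "t \<le> r")
      case True
      have "N m r * (N 0 r - N 0 t) / r\<^sup>2 \<le> N m r * N 0 r / r\<^sup>2"
        using N_nn[of 0 t] N_nn[of m r] by (intro divide_right_mono mult_left_mono) auto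
      then show ?thesis using True N_nn N_mono[OF True]
        by (simp add: ennreal_mult[symmetric] ennreal_leI mult_ac)
    qed simp
  qed
  also have "\<dots> = (\<integral>\<^sup>+ u. ennreal (h (max t u) * D u * h u ^ m) \<partial>lborel)"
    by (rule c4E[OF assms])
  finally show ?thesis .
qed

lemma c1213: assumes "1 \<le> t"
  shows "(\<integral>\<^sup>+ s. ennreal (indicator {1..t} s * D s * h s ^ j * Q k s) \<partial>lborel) \<le> ennreal (N (k + j + 1) t)"
proof -
  have "(\<integral>\<^sup>+ s. ennreal (indicator {1..t} s * D s * h s ^ j * Q k s) \<partial>lborel)
      = (\<integral>\<^sup>+ r. ennreal (N k r / r\<^sup>2) * (\<integral>\<^sup>+ s. ennreal (indicator {1..t} s * D s * h s ^ j * indicator {..r} s) \<partial>lborel) \<partial>lborel)"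
    by (rule Q_swap) (use assms D_nn h_nn in \<open>auto simp: indicator_def\<close>)
  also have "\<dots> = (\<integral>\<^sup>+ r. ennreal (N k r / r\<^sup>2) * ennreal (N j (min r t)) \<partial>lborel)"
    unfolding I2 ..
  also have "\<dots> \<le> (\<integral>\<^sup>+ r. ennreal (indicator {1..t} r / r\<^sup>2 * N 0 r * N (k + j) r) + ennreal (indicator {t<..} r / r\<^sup>2 * N k r) * ennreal (N j t) \<partial>lborel)"
  proof (rule nn_integral_mono)
    fix r
    show "ennreal (N k r / r\<^sup>2) * ennreal (N j (min r t))
        \<le> ennreal (indicator {1..t} r / r\<^sup>2 * N 0 r * N (k + j) r) + ennreal (indicator {t<..} r / r\<^sup>2 * N k r) * ennreal (N j t)"
    proof (cases "r < 1")
      case True then show ?thesis using N_below by simp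
    next
      case False
      show ?thesis
      proof (cases "r \<le> t")
        case True
        have "N k r * N j r / r\<^sup>2 \<le> N 0 r * N (k + j) r / r\<^sup>2"
          using c5[of k r j] by (intro divide_right_mono) auto
        then have "ennreal (N k r / r\<^sup>2) * ennreal (N j (min r t)) \<le> ennreal (indicator {1..t} r / r\<^sup>2 * N 0 r * N (k + j) r)"
          using True False N_nn by (simp add: ennreal_mult[symmetric] ennreal_leI mult_ac)
        then show ?thesis by (rule order_trans) simp
      next
        case True2: False
        then show ?thesis using N_nn by (simp add: ennreal_mult[symmetric])
      qed
    qed
  qed
  also have "\<dots> = (\<integral>\<^sup>+ r. ennreal (indicator {1..t} r / r\<^sup>2 * N 0 r * N (k + j) r) \<partial>lborel)
      + (\<integral>\<^sup>+ r. ennreal (indicator {t<..} r / r\<^sup>2 * N k r) \<partial>lborel) * ennreal (N j t)"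
    by (subst nn_integral_add) (auto simp: nn_integral_multc)
  also have "\<dots> = ennreal (N (k + j + 1) t - h t * N (k + j) t) + ennreal (Q k t) * ennreal (N j t)"
    using c2E[OF assms, of "k + j"] kern_open[of t k] assms by simp
  also have "\<dots> = ennreal (N (k + j + 1) t - h t * N (k + j) t + N j t * Q k t)"
    using c7[of t "k + j"] N_nn Q_nn by (simp add: ennreal_mult[symmetric] ennreal_plus[symmetric] mult.commute del: ennreal_plus)
  also have "\<dots> \<le> ennreal (N (k + j + 1) t)"
    using c6[OF assms, of j k] by (intro ennreal_leI) (simp add: add.commute)
  finally show ?thesis .
qed

lemma LB_conv:
  assumes A: "A \<subseteq> {1..}" "A \<in> sets borel" and [measurable]: "X \<in> borel_measurable borel"
    and Xnn: "\<And>s. 0 \<le> X s"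
  shows "(LBINT s:A. d s * X s) = enn2real (\<integral>\<^sup>+ s. ennreal (indicator A s * D s * X s) \<partial>lborel)"
proof -
  have "(LBINT s:A. d s * X s) = (\<integral> s. indicator A s * D s * X s \<partial>lborel)"
    unfolding set_lebesgue_integral_def
    by (rule Bochner_Integration.integral_cong) (use A in \<open>auto simp: indicator_def D_def\<close>)
  also have "\<dots> = enn2real (\<integral>\<^sup>+ s. ennreal (indicator A s * D s * X s) \<partial>lborel)"
    by (rule integral_eq_nn_integral) (use A D_nn Xnn in auto)
  finally show ?thesis .
qed

lemma enn2real_le_ennreal: "x \<le> ennreal c \<Longrightarrow> 0 \<le> c \<Longrightarrow> enn2real x \<le> c"
  by (metis enn2real_ennreal enn2real_mono ennreal_less_top)

lemma N0_LB: assumes "1 \<le> a" "a \<le> b" shows "(LBINT s:{a..b}. d s) = N 0 b - N 0 a"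
proof -
  have "(LBINT s:{a..b}. d s * 1) = enn2real (\<integral>\<^sup>+ s. ennreal (indicator {a..b} s * D s * 1) \<partial>lborel)"
    by (rule LB_conv) (use assms in auto)
  also have "\<dots> = N 0 b - N 0 a" using Npart[OF assms(2), of 0] N_mono[OF assms(2), of 0] by simp
  finally show ?thesis by simp
qed

lemma c1415:
  assumes ab: "1 \<le> a" "a \<le> b" and [measurable]: "X \<in> borel_measurable borel"
    and Xnn: "\<And>s. 0 \<le> X s" and XC: "\<And>s. a \<le> s \<Longrightarrow> s \<le> b \<Longrightarrow> X s \<le> C"
  shows "(LBINT s:{a..b}. d s * X s) \<le> C * (N 0 b - N 0 a)"
proof -
  have C0: "0 \<le> C" using Xnn[of a] XC[of a] ab by simp
  have "(\<integral>\<^sup>+ s. ennreal (indicator {a..b} s * D s * X s) \<partial>lborel)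
      \<le> (\<integral>\<^sup>+ s. ennreal C * ennreal (indicator {a..b} s * D s * h s ^ 0) \<partial>lborel)"
  proof (rule nn_integral_mono)
    fix s show "ennreal (indicator {a..b} s * D s * X s) \<le> ennreal C * ennreal (indicator {a..b} s * D s * h s ^ 0)"
    proof (cases "s \<in> {a..b}")
      case True
      then have "D s * X s \<le> D s * C" using XC D_nn by (intro mult_left_mono) auto
      then show ?thesis using True C0 D_nn by (simp add: ennreal_mult[symmetric] mult.commute)
    qed simp
  qed
  also have "\<dots> = ennreal C * ennreal (N 0 b - N 0 a)"
    using Npart[OF ab(2), of 0] by (subst nn_integral_cmult) auto
  also have "\<dots> = ennreal (C * (N 0 b - N 0 a))" using C0 N_mono[OF ab(2)] by (simp add: ennreal_mult)
  finally have "enn2real (\<integral>\<^sup>+ s. ennreal (indicator {a..b} s * D s * X s) \<partial>lborel) \<le> C * (N 0 b - N 0 a)"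
    by (rule enn2real_le_ennreal) (use C0 N_mono[OF ab(2)] in simp)
  moreover have "(LBINT s:{a..b}. d s * X s) = enn2real (\<integral>\<^sup>+ s. ennreal (indicator {a..b} s * D s * X s) \<partial>lborel)"
    by (rule LB_conv) (use ab Xnn in auto)
  ultimately show ?thesis by simp
qed

lemma PP_eq:
  assumes "1 \<le> t" "cond_star d m"
  shows "ennreal (PP d m t) = (\<integral>\<^sup>+ u. ennreal (h (max t u) * D u * h u ^ m) \<partial>lborel)"
proof -
  have e: "(\<integral>\<^sup>+ s\<in>{1..}. ennreal (hh d (max t s) * d s * hh d s ^ m) \<partial>lborel) = (\<integral>\<^sup>+ u. ennreal (h (max t u) * D u * h u ^ m) \<partial>lborel)"
    by (rule nn_integral_cong) (auto simp: D_def h_def indicator_def)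
  have "(\<integral>\<^sup>+ u. ennreal (h (max t u) * D u * h u ^ m) \<partial>lborel) \<le> (\<integral>\<^sup>+ s\<in>{1..}. ennreal (d s * hh d s ^ Suc m) \<partial>lborel)"
  proof (rule nn_integral_mono)
    fix u show "ennreal (h (max t u) * D u * h u ^ m) \<le> ennreal (d u * hh d u ^ Suc m) * indicator {1..} u"
    proof (cases "1 \<le> u")
      case True
      have "h (max t u) * (D u * h u ^ m) \<le> h u * (D u * h u ^ m)"
        using h_anti[of u "max t u"] D_nn h_nn by (intro mult_right_mono) auto
      then show ?thesis using True by (auto simp: D_def h_def mult_ac intro!: ennreal_leI)
    qed (simp add: D_out)
  qed
  also have "\<dots> < \<infinity>" using assms(2) unfolding cond_star_def .
  finally show ?thesis unfolding PP_def e[symmetric] by (simp add: ennreal_enn2real_if less_top)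
qed

end

theorem lemma3p8:
  fixes h0 h0' :: "real \<Rightarrow> real" and i j m :: nat and a b t :: real
  assumes deriv: "\<And>x. x \<ge> 1 \<Longrightarrow> (h0 has_real_derivative h0' x) (at x within {1..})"
    and cont: "continuous_on {1..} h0'"
    and pos: "\<And>x. x \<ge> 1 \<Longrightarrow> h0 x > 0"
    and mono: "\<And>x. x \<ge> 1 \<Longrightarrow> h0' x \<ge> 0"
    and L1a: "set_integrable lborel {1..} (\<lambda>x. h0 x / x\<^sup>2)"
    and L1b: "set_integrable lborel {1..} (\<lambda>x. h0' x / x)"
    and ab: "1 \<le> a" "a \<le> b"
    and t: "1 \<le> t"
  shows
    "((\<integral>\<^sup>+ s\<in>{t..}. ennreal (NN h0' m s / s\<^sup>2) \<partial>lborel) = ennreal (QQ h0' (int m) t))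
   \<and> ((LBINT s:{1..t}. NN h0' 0 s * NN h0' m s / s\<^sup>2)
       = NN h0' (Suc m) t - hh h0' t * NN h0' m t)
   \<and> (NN h0' (Suc m) t - hh h0' t * NN h0' m t \<le> NN h0' (Suc m) t)
   \<and> (cond_star h0' m \<longrightarrow>
       (\<integral>\<^sup>+ s\<in>{t..}. ennreal (NN h0' 0 s * NN h0' m s / s\<^sup>2) \<partial>lborel) = ennreal (PP h0' m t))
   \<and> (NN h0' i t * NN h0' j t \<le> NN h0' 0 t * NN h0' (i + j) t)
   \<and> (NN h0' i t * QQ h0' (int j) t \<le> hh h0' t * NN h0' (i + j) t)
   \<and> (hh h0' t * NN h0' (i + j) t \<le> NN h0' (i + j + 1) t)
   \<and> (QQ h0' (int i) t * QQ h0' (int j) t \<le> hh h0' t * QQ h0' (int (i + j)) t)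
   \<and> (hh h0' t * QQ h0' (int (i + j)) t \<le> 2 * QQ h0' (int (i + j + 1)) t)
   \<and> ((\<integral>\<^sup>+ s\<in>{t..}. ennreal (h0' s * hh h0' s * QQ h0' (int m - 1) s) \<partial>lborel)
       \<le> (\<integral>\<^sup>+ s\<in>{t..}. ennreal (h0' s * QQ h0' (int m) s) \<partial>lborel))
   \<and> (cond_star h0' m \<longrightarrow>
       (\<integral>\<^sup>+ s\<in>{t..}. ennreal (h0' s * QQ h0' (int m) s) \<partial>lborel) \<le> ennreal (PP h0' m t))
   \<and> ((LBINT s:{1..t}. h0' s * hh h0' s * QQ h0' (int m - 1) s) \<le> NN h0' (Suc m) t)
   \<and> ((LBINT s:{1..t}. h0' s * QQ h0' (int m) s) \<le> NN h0' (Suc m) t)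
   \<and> ((LBINT s:{a..b}. h0' s * QQ h0' (int m) s) \<le> QQ h0' (int m) a * (h0 b - h0 a))
   \<and> ((LBINT s:{a..b}. h0' s * hh h0' s * QQ h0' (int m - 1) s) \<le> 2 * QQ h0' (int m) a * (h0 b - h0 a))"
proof -
  interpret I: L h0'
  proof
    show "\<And>x. 1 \<le> x \<Longrightarrow> 0 \<le> h0' x" using mono by simp
    have ib: "integrable lborel (\<lambda>x. indicator {1..} x *\<^sub>R (h0' x / x))"
      using L1b unfolding set_integrable_def .
    have "(\<lambda>x. (indicator {1..} x *\<^sub>R (h0' x / x)) * x) \<in> borel_measurable borel"
      using borel_measurable_integrable[OF ib] by measurable
    also have "(\<lambda>x. (indicator {1..} x *\<^sub>R (h0' x / x)) * x) = (\<lambda>x. indicator {1..} x * h0' x)"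
      by (auto simp: indicator_def fun_eq_iff)
    finally show "(\<lambda>x. indicator {1..} x * h0' x) \<in> borel_measurable borel" .
    have "(\<integral>\<^sup>+ x. ennreal (indicator {1..} x *\<^sub>R (h0' x / x)) \<partial>lborel) \<noteq> \<infinity>"
      using integrableD(2)[OF ib] .
    moreover have "(\<lambda>x. ennreal (indicator {1..} x *\<^sub>R (h0' x / x))) = (\<lambda>x. ennreal (indicator {1..} x * h0' x / x))"
      by (auto simp: indicator_def fun_eq_iff)
    ultimately show "(\<integral>\<^sup>+ x. ennreal (indicator {1..} x * h0' x / x) \<partial>lborel) < \<infinity>"
      by (simp add: less_top)
  qed
  have hh: "hh h0' = L.h h0'" by (simp add: fun_eq_iff I.h_def)
  have NN: "NN h0' k = L.N h0' k" for k by (simp add: fun_eq_iff I.N_def)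
  have QQ: "QQ h0' (int k) = L.Q h0' k" for k by (simp add: fun_eq_iff I.Q_def)
  have QQm1: "QQ h0' (int k - 1) = (if k = 0 then (\<lambda>_. 1) else L.Q h0' (k - 1))" for k
    by (cases k) (auto simp: fun_eq_iff I.Q_def QQ_def)
  have t0: "0 < t" using t by simp
  note defs = hh NN QQ
  have G1: "(\<integral>\<^sup>+ s\<in>{t..}. ennreal (NN h0' m s / s\<^sup>2) \<partial>lborel) = ennreal (QQ h0' (int m) t)"
    unfolding defs I.kern[OF t0, symmetric]
    by (rule nn_integral_cong) (auto simp: indicator_def)
  have G2: "(LBINT s:{1..t}. NN h0' 0 s * NN h0' m s / s\<^sup>2) = NN h0' (Suc m) t - hh h0' t * NN h0' m t"
  proof -
    have "(LBINT s:{1..t}. L.N h0' 0 s * L.N h0' m s / s\<^sup>2)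
        = (\<integral> s. indicator {1..t} s / s\<^sup>2 * L.N h0' 0 s * L.N h0' m s \<partial>lborel)"
      unfolding set_lebesgue_integral_def
      by (rule Bochner_Integration.integral_cong) (auto simp: indicator_def)
    also have "\<dots> = enn2real (\<integral>\<^sup>+ s. ennreal (indicator {1..t} s / s\<^sup>2 * L.N h0' 0 s * L.N h0' m s) \<partial>lborel)"
      by (rule integral_eq_nn_integral) (auto simp: I.N_nn)
    also have "\<dots> = L.N h0' (m + 1) t - L.h h0' t * L.N h0' m t"
      unfolding I.c2E[OF t] using I.c7[of t m] by simp
    finally show ?thesis unfolding defs by simp
  qed
  have G3: "NN h0' (Suc m) t - hh h0' t * NN h0' m t \<le> NN h0' (Suc m) t"
    unfolding defs using I.h_nn[of t] I.N_nn[of m t] by simp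
  have G4: "cond_star h0' m \<longrightarrow>
       (\<integral>\<^sup>+ s\<in>{t..}. ennreal (NN h0' 0 s * NN h0' m s / s\<^sup>2) \<partial>lborel) = ennreal (PP h0' m t)"
  proof
    assume c: "cond_star h0' m"
    have "(\<integral>\<^sup>+ s\<in>{t..}. ennreal (NN h0' 0 s * NN h0' m s / s\<^sup>2) \<partial>lborel)
        = (\<integral>\<^sup>+ s. ennreal (indicator {t..} s / s\<^sup>2 * L.N h0' 0 s * L.N h0' m s) \<partial>lborel)"
      unfolding defs by (rule nn_integral_cong) (auto simp: indicator_def)
    also have "\<dots> = ennreal (PP h0' m t)" unfolding I.c4E[OF t] I.PP_eq[OF t c] ..
    finally show "(\<integral>\<^sup>+ s\<in>{t..}. ennreal (NN h0' 0 s * NN h0' m s / s\<^sup>2) \<partial>lborel) = ennreal (PP h0' m t)" .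
  qed
  have G5: "NN h0' i t * NN h0' j t \<le> NN h0' 0 t * NN h0' (i + j) t"
    unfolding defs by (rule I.c5)
  have G6: "NN h0' i t * QQ h0' (int j) t \<le> hh h0' t * NN h0' (i + j) t"
    unfolding defs by (rule I.c6[OF t])
  have G7: "hh h0' t * NN h0' (i + j) t \<le> NN h0' (i + j + 1) t"
    unfolding defs by (rule I.c7)
  have G8: "QQ h0' (int i) t * QQ h0' (int j) t \<le> hh h0' t * QQ h0' (int (i + j)) t"
    unfolding defs by (rule I.c8)
  have G9: "hh h0' t * QQ h0' (int (i + j)) t \<le> 2 * QQ h0' (int (i + j + 1)) t"
    unfolding defs by (rule I.c9[OF t])
  have G10: "(\<integral>\<^sup>+ s\<in>{t..}. ennreal (h0' s * hh h0' s * QQ h0' (int m - 1) s) \<partial>lborel)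
       \<le> (\<integral>\<^sup>+ s\<in>{t..}. ennreal (h0' s * QQ h0' (int m) s) \<partial>lborel)"
  proof (cases m)
    case 0
    show ?thesis unfolding 0 QQm1 QQ hh
      by (rule nn_integral_mono) (simp add: I.Q0)
  next
    case (Suc k)
    have "(\<integral>\<^sup>+ s\<in>{t..}. ennreal (h0' s * hh h0' s * QQ h0' (int m - 1) s) \<partial>lborel)
        = (\<integral>\<^sup>+ s. ennreal (indicator {t..} s * L.D h0' s * L.h h0' s ^ 1 * L.Q h0' k s) \<partial>lborel)"
      unfolding QQm1 hh Suc using t by (intro nn_integral_cong) (auto simp: indicator_def I.D_def)
    also have "\<dots> \<le> (\<integral>\<^sup>+ s. ennreal (indicator {t..} s * L.D h0' s * L.h h0' s ^ 0 * L.Q h0' (k + 1) s) \<partial>lborel)"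
      by (rule I.c10E[OF t])
    also have "\<dots> = (\<integral>\<^sup>+ s\<in>{t..}. ennreal (h0' s * QQ h0' (int m) s) \<partial>lborel)"
      unfolding QQ Suc using t by (intro nn_integral_cong) (auto simp: indicator_def I.D_def)
    finally show ?thesis .
  qed
  have G11: "cond_star h0' m \<longrightarrow>
       (\<integral>\<^sup>+ s\<in>{t..}. ennreal (h0' s * QQ h0' (int m) s) \<partial>lborel) \<le> ennreal (PP h0' m t)"
  proof
    assume c: "cond_star h0' m"
    have "(\<integral>\<^sup>+ s\<in>{t..}. ennreal (h0' s * QQ h0' (int m) s) \<partial>lborel)
        = (\<integral>\<^sup>+ s. ennreal (indicator {t..} s * L.D h0' s * L.h h0' s ^ 0 * L.Q h0' m s) \<partial>lborel)"
      unfolding QQ using t by (intro nn_integral_cong) (auto simp: indicator_def I.D_def)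
    also have "\<dots> \<le> ennreal (PP h0' m t)" unfolding I.PP_eq[OF t c] by (rule I.c11E[OF t])
    finally show "(\<integral>\<^sup>+ s\<in>{t..}. ennreal (h0' s * QQ h0' (int m) s) \<partial>lborel) \<le> ennreal (PP h0' m t)" .
  qed
  have G12: "(LBINT s:{1..t}. h0' s * hh h0' s * QQ h0' (int m - 1) s) \<le> NN h0' (Suc m) t"
  proof (cases m)
    case 0
    show ?thesis unfolding 0 QQm1 by (simp add: NN_def)
  next
    case (Suc k)
    have "(LBINT s:{1..t}. h0' s * hh h0' s * QQ h0' (int m - 1) s) = (LBINT s:{1..t}. h0' s * (L.h h0' s ^ 1 * L.Q h0' k s))"
      unfolding QQm1 hh Suc by (simp add: mult.assoc)
    also have "\<dots> = enn2real (\<integral>\<^sup>+ s. ennreal (indicator {1..t} s * L.D h0' s * (L.h h0' s ^ 1 * L.Q h0' k s)) \<partial>lborel)"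
      by (rule I.LB_conv) (auto simp: I.h_nn I.Q_nn I.h_meas I.Q_meas)
    also have "\<dots> \<le> L.N h0' (k + 1 + 1) t"
    proof (rule I.enn2real_le_ennreal)
      show "(\<integral>\<^sup>+ s. ennreal (indicator {1..t} s * L.D h0' s * (L.h h0' s ^ 1 * L.Q h0' k s)) \<partial>lborel) \<le> ennreal (L.N h0' (k + 1 + 1) t)"
        using I.c1213[OF t, of 1 k] by (simp only: mult.assoc)
    qed (rule I.N_nn)
    finally show ?thesis unfolding NN Suc by simp
  qed
  have G13: "(LBINT s:{1..t}. h0' s * QQ h0' (int m) s) \<le> NN h0' (Suc m) t"
  proof -
    have "(LBINT s:{1..t}. h0' s * QQ h0' (int m) s) = (LBINT s:{1..t}. h0' s * (L.h h0' s ^ 0 * L.Q h0' m s))"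
      unfolding QQ by simp
    also have "\<dots> = enn2real (\<integral>\<^sup>+ s. ennreal (indicator {1..t} s * L.D h0' s * (L.h h0' s ^ 0 * L.Q h0' m s)) \<partial>lborel)"
      by (rule I.LB_conv) (auto simp: I.h_nn I.Q_nn I.h_meas I.Q_meas)
    also have "\<dots> \<le> L.N h0' (m + 0 + 1) t"
    proof (rule I.enn2real_le_ennreal)
      show "(\<integral>\<^sup>+ s. ennreal (indicator {1..t} s * L.D h0' s * (L.h h0' s ^ 0 * L.Q h0' m s)) \<partial>lborel) \<le> ennreal (L.N h0' (m + 0 + 1) t)"
        using I.c1213[OF t, of 0 m] by (simp only: mult.assoc)
    qed (rule I.N_nn)
    finally show ?thesis unfolding NN by simp
  qed
  have FTC: "(LBINT s:{a..b}. h0' s) = h0 b - h0 a"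
  proof -
    have "(LBINT s=a..b. h0' s) = h0 b - h0 a"
    proof (rule interval_integral_FTC_finite)
      show "continuous_on {min a b..max a b} h0'"
        by (rule continuous_on_subset[OF cont]) (use ab in auto)
      fix x assume x: "min a b \<le> x" "x \<le> max a b"
      have "(h0 has_real_derivative h0' x) (at x within {1..})" using deriv x ab by simp
      then have "(h0 has_real_derivative h0' x) (at x within {min a b..max a b})"
        by (rule DERIV_subset) (use ab in auto)
      then show "(h0 has_vector_derivative h0' x) (at x within {min a b..max a b})"
        by (simp add: has_real_derivative_iff_has_vector_derivative)
    qed
    then show ?thesis using interval_integral_Icc[OF ab(2), of h0'] by simp
  qed
  have N0ab: "L.N h0' 0 b - L.N h0' 0 a = h0 b - h0 a"
    using I.N0_LB[OF ab] FTC by simp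
  have G14: "(LBINT s:{a..b}. h0' s * QQ h0' (int m) s) \<le> QQ h0' (int m) a * (h0 b - h0 a)"
    unfolding QQ N0ab[symmetric]
    by (rule I.c1415[OF ab]) (auto simp: I.Q_nn intro: I.Q_anti)
  have G15: "(LBINT s:{a..b}. h0' s * hh h0' s * QQ h0' (int m - 1) s) \<le> 2 * QQ h0' (int m) a * (h0 b - h0 a)"
  proof -
    have "(LBINT s:{a..b}. h0' s * hh h0' s * QQ h0' (int m - 1) s)
        = (LBINT s:{a..b}. h0' s * (L.h h0' s * QQ h0' (int m - 1) s))"
      by (simp add: mult.assoc hh)
    also have "\<dots> \<le> (2 * L.Q h0' m a) * (L.N h0' 0 b - L.N h0' 0 a)"
    proof (rule I.c1415[OF ab])
      show "(\<lambda>s. L.h h0' s * QQ h0' (int m - 1) s) \<in> borel_measurable borel"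
        unfolding QQm1 by (cases "m = 0") auto
      fix s
      show "0 \<le> L.h h0' s * QQ h0' (int m - 1) s"
        unfolding QQm1 using I.h_nn[of s] I.Q_nn by simp
      assume s: "a \<le> s" "s \<le> b"
      have "L.h h0' s * QQ h0' (int m - 1) s \<le> 2 * L.Q h0' m s"
      proof (cases m)
        case 0 then show ?thesis unfolding QQm1 using I.h_nn[of s] by (simp add: I.Q0)
      next
        case (Suc k)
        then show ?thesis unfolding QQm1 using I.c9[of s k] s ab by simp
      qed
      also have "\<dots> \<le> 2 * L.Q h0' m a" using I.Q_anti[OF s(1)] by simp
      finally show "L.h h0' s * QQ h0' (int m - 1) s \<le> 2 * L.Q h0' m a" .
    qed
    finally show ?thesis unfolding QQ N0ab by simp
  qed
  show ?thesis using G1 G2 G3 G4 G5 G6 G7 G8 G9 G10 G11 G12 G13 G14 G15 by blast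
qed

end
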